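(* Let $(X,d)$ be a geometrically doubling metric space and let $\mathscr{D}=\{Q^k_\alpha\}$ be a system of dyadic cubes with parameters $\delta\in(0,1)$ and $0<c_1\le C_1<\infty$. Let $m\in\mathbb{Z}$ and let $Q^m_\alpha\in\mathscr{D}$ be a dyadic cube of generation $m$. Then both $Q^m_\alpha$ and $X\setminus Q^m_\alpha$ are d-plump with parameters $\delta$, $m$, $b_0=c_1$ and $B_0=c_1+C_1$. In particular (provided $\operatorname{diam}(Q^m_\alpha)>0$), $Q^m_\alpha$ is plump with parameters $$b=\frac{\delta c_1}{c_1+C_1}\quad\text{and}\quad R=\frac{c_1+C_1}{2\delta C_1}\operatorname{diam}(Q^m_\alpha).$$
   Context: For $x\in X$ and $r>0$, $B(x,r)=\{y\in X: d(y,x)<r\}$. $(X,d)$ is geometrically doubling if there is $A_1\in\mathbb{N}$ such that every ball $B(x,r)$ can be covered by at most $A_1$ balls of radius $r/2$. A system of dyadic cubes with parameters $\delta\in(0,1)$ and $0<c_1\le C_1<\infty$ is a family of Borel sets $Q^k_\alpha$, $k\in\mathbb{Z}$, $\alpha\in I(k)$ (with $I(k)$ at most countable), together with points $x^k_\alpha\in X$, such that: (i) for every $k$, $X=\bigcup_{\alpha\in I(k)}Q^k_\alpha$ as a disjoint union; (ii) if $\ell\ge k$ then either $Q^\ell_\beta\subseteq Q^k_\alpha$ or $Q^\ell_\beta\cap Q^k_\alpha=\emptyset$; (iii) $B(x^k_\alpha,c_1\delta^k)\subseteq Q^k_\alpha\subseteq B(x^k_\alpha,C_1\delta^k)=:B(Q^k_\alpha)$;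 (iv) if $\ell\ge k$ and $Q^\ell_\beta\subseteq Q^k_\alpha$ then $B(Q^\ell_\beta)\subseteq B(Q^k_\alpha)$. $Q^k_\alpha$ is called a dyadic cube of generation $k$. A set $E\subseteq X$ is plump with parameters $R>0$, $b\in(0,1)$ if for all $y\in E$ and $0<r\le R$ there is $z\in X$ with $B(z,br)\subseteq B(y,r)\cap E$. A set $E$ is d-plump with parameters $\delta\in(0,1)$, $m\in\mathbb{Z}$, $0<b_0\le B_0<\infty$ if for all $y\in E$ and all integers $k\ge m$ there is $z\in X$ with $B(z,b_0\delta^k)\subseteq B(y,B_0\delta^k)\cap E$. *)

theory Defs
  imports "HOL-Analysis.Analysis"
begin

text \<open>The metric space X is the whole type 'a :: metric_space; B(x,r) is ball x r.\<close>

definition geometrically_doubling :: "'a::metric_space itself \<Rightarrow> bool" where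
  "geometrically_doubling _ \<longleftrightarrow>
     (\<exists>A1::nat. \<forall>(x::'a) r. r > 0 \<longrightarrow>
        (\<exists>C. finite C \<and> card C \<le> A1 \<and> ball x r \<subseteq> (\<Union>c\<in>C. ball c (r/2))))"

definition dyadic_system ::
  "real \<Rightarrow> real \<Rightarrow> real \<Rightarrow> (int \<Rightarrow> 'i set) \<Rightarrow> (int \<Rightarrow> 'i \<Rightarrow> 'a::metric_space set)
     \<Rightarrow> (int \<Rightarrow> 'i \<Rightarrow> 'a) \<Rightarrow> bool" where
  "dyadic_system \<delta> c1 C1 I Q x \<longleftrightarrow>
     0 < \<delta> \<and> \<delta> < 1 \<and> 0 < c1 \<and> c1 \<le> C1 \<and>
     (\<forall>k. countable (I k)) \<and>
     (\<forall>k. \<forall>\<alpha>\<in>I k. Q k \<alpha> \<in> sets borel) \<and>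
     (\<forall>k. (\<Union>\<alpha>\<in>I k. Q k \<alpha>) = UNIV) \<and>
     (\<forall>k. \<forall>\<alpha>\<in>I k. \<forall>\<beta>\<in>I k. \<alpha> \<noteq> \<beta> \<longrightarrow> Q k \<alpha> \<inter> Q k \<beta> = {}) \<and>
     (\<forall>k l. k \<le> l \<longrightarrow> (\<forall>\<alpha>\<in>I k. \<forall>\<beta>\<in>I l. Q l \<beta> \<subseteq> Q k \<alpha> \<or> Q l \<beta> \<inter> Q k \<alpha> = {})) \<and>
     (\<forall>k. \<forall>\<alpha>\<in>I k. ball (x k \<alpha>) (c1 * \<delta> powr of_int k) \<subseteq> Q k \<alpha> \<and>
                    Q k \<alpha> \<subseteq> ball (x k \<alpha>) (C1 * \<delta> powr of_int k)) \<and>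
     (\<forall>k l. k \<le> l \<longrightarrow> (\<forall>\<alpha>\<in>I k. \<forall>\<beta>\<in>I l. Q l \<beta> \<subseteq> Q k \<alpha> \<longrightarrow>
          ball (x l \<beta>) (C1 * \<delta> powr of_int l) \<subseteq> ball (x k \<alpha>) (C1 * \<delta> powr of_int k)))"

definition plump :: "real \<Rightarrow> real \<Rightarrow> 'a::metric_space set \<Rightarrow> bool" where
  "plump R b E \<longleftrightarrow> 0 < R \<and> 0 < b \<and> b < 1 \<and>
     (\<forall>y\<in>E. \<forall>r. 0 < r \<and> r \<le> R \<longrightarrow> (\<exists>z. ball z (b * r) \<subseteq> ball y r \<inter> E))"

definition d_plump :: "real \<Rightarrow> int \<Rightarrow> real \<Rightarrow> real \<Rightarrow> 'a::metric_space set \<Rightarrow> bool" where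
  "d_plump \<delta> m b0 B0 E \<longleftrightarrow> 0 < \<delta> \<and> \<delta> < 1 \<and> 0 < b0 \<and> b0 \<le> B0 \<and>
     (\<forall>y\<in>E. \<forall>k::int. k \<ge> m \<longrightarrow>
        (\<exists>z. ball z (b0 * \<delta> powr of_int k) \<subseteq> ball y (B0 * \<delta> powr of_int k) \<inter> E))"

end

theory Submission imports Defs begin
lemma powr_le_iff_neg:
  fixes d t a :: real
  assumes "0 < d" "d < 1" "0 < t"
  shows "d powr a \<le> t \<longleftrightarrow> ln t / ln d \<le> a"
proof -
  have l: "ln d < 0" using assms by simp
  have p: "0 < d powr a" using assms by simp
  have "d powr a \<le> t \<longleftrightarrow> ln (d powr a) \<le> ln t" using assms p by (simp only: ln_le_cancel_iff)
  also have "\<dots> \<longleftrightarrow> a * ln d \<le> ln t" using assms by (simp add: ln_powr)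
  also have "\<dots> \<longleftrightarrow> ln t / ln d \<le> a" using l by (simp add: neg_divide_le_eq)
  finally show ?thesis .
qed
lemma exists_k:
  fixes d t :: real and m :: int
  assumes "0 < d" "d < 1" "0 < t" "t \<le> d powr of_int (m - 1)"
  shows "\<exists>k\<ge>m. d powr of_int k \<le> t \<and> t \<le> d powr of_int (k - 1)"
proof -
  define k0 where "k0 = \<lceil>ln t / ln d\<rceil>"
  have h1: "d powr of_int k0 \<le> t" using powr_le_iff_neg[OF assms(1-3)] k0_def by simp
  have h2: "\<not> d powr of_int (k0 - 1) \<le> t" using powr_le_iff_neg[OF assms(1-3)] k0_def
    by (simp add: ceiling_less_cancel) linarith
  show ?thesis
  proof (cases "m \<le> k0")
    case True thus ?thesis using h1 h2 by (intro exI[of _ k0]) auto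
  next
    case False
    have "d powr of_int m \<le> d powr of_int k0"
      using False assms by (intro powr_mono') auto
    thus ?thesis using h1 assms(4) by (intro exI[of _ m]) auto
  qed
qed

theorem proposition3p1:
  fixes I :: "int \<Rightarrow> 'i set" and Q :: "int \<Rightarrow> 'i \<Rightarrow> 'a::metric_space set"
    and x :: "int \<Rightarrow> 'i \<Rightarrow> 'a" and \<delta> c1 C1 :: real and m :: int and \<alpha> :: 'i
  assumes "geometrically_doubling TYPE('a)"
    and "dyadic_system \<delta> c1 C1 I Q x"
    and "\<alpha> \<in> I m"
  shows "d_plump \<delta> m c1 (c1 + C1) (Q m \<alpha>)
       \<and> d_plump \<delta> m c1 (c1 + C1) (UNIV - Q m \<alpha>)
       \<and> (diameter (Q m \<alpha>) > 0 \<longrightarrow>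
           plump ((c1 + C1) / (2 * \<delta> * C1) * diameter (Q m \<alpha>)) (\<delta> * c1 / (c1 + C1)) (Q m \<alpha>))"
proof -
  note D = assms(2)[unfolded dyadic_system_def]
  have d0: "0 < \<delta>" "\<delta> < 1" using D by blast+
  have c0: "0 < c1" "c1 \<le> C1" using D by blast+
  have cov: "\<And>k. (\<Union>\<beta>\<in>I k. Q k \<beta>) = UNIV" using D by (elim conjE) blast
  have nest_all: "\<forall>k l. k \<le> l \<longrightarrow> (\<forall>\<alpha>\<in>I k. \<forall>\<beta>\<in>I l. Q l \<beta> \<subseteq> Q k \<alpha> \<or> Q l \<beta> \<inter> Q k \<alpha> = {})"
    using D by (elim conjE) assumption
  have balls_all: "\<forall>k. \<forall>\<alpha>\<in>I k. ball (x k \<alpha>) (c1 * \<delta> powr of_int k) \<subseteq> Q k \<alpha> \<and>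
                    Q k \<alpha> \<subseteq> ball (x k \<alpha>) (C1 * \<delta> powr of_int k)"
    using D by (elim conjE) assumption
  have nest: "\<And>k l \<alpha>' \<beta>. k \<le> l \<Longrightarrow> \<alpha>' \<in> I k \<Longrightarrow> \<beta> \<in> I l \<Longrightarrow> Q l \<beta> \<subseteq> Q k \<alpha>' \<or> Q l \<beta> \<inter> Q k \<alpha>' = {}"
    using nest_all by blast
  have balls: "\<And>k \<beta>. \<beta> \<in> I k \<Longrightarrow> ball (x k \<beta>) (c1 * \<delta> powr of_int k) \<subseteq> Q k \<beta> \<and>
                    Q k \<beta> \<subseteq> ball (x k \<beta>) (C1 * \<delta> powr of_int k)"
    using balls_all by blast
  have cube: "\<exists>\<beta>\<in>I k. y \<in> Q k \<beta> \<and> ball (x k \<beta>) (c1 * \<delta> powr of_int k) \<subseteq> Q k \<beta>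
     \<and> ball (x k \<beta>) (c1 * \<delta> powr of_int k) \<subseteq> ball y ((c1 + C1) * \<delta> powr of_int k)" for y k
  proof -
    from cov[of k] obtain \<beta> where b: "\<beta> \<in> I k" "y \<in> Q k \<beta>" by blast
    have "ball (x k \<beta>) (c1 * \<delta> powr of_int k) \<subseteq> ball y ((c1 + C1) * \<delta> powr of_int k)"
    proof
      fix z assume z: "z \<in> ball (x k \<beta>) (c1 * \<delta> powr of_int k)"
      have "dist y (x k \<beta>) < C1 * \<delta> powr of_int k" using balls[OF b(1)] b(2)
        by (auto simp: dist_commute)
      moreover have "dist (x k \<beta>) z < c1 * \<delta> powr of_int k" using z by simp
      ultimately show "z \<in> ball y ((c1 + C1) * \<delta> powr of_int k)"
        using dist_triangle[of y z "x k \<beta>"] by (simp add: algebra_simps)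
    qed
    thus ?thesis using b balls[OF b(1)] by blast
  qed
  have P1: "d_plump \<delta> m c1 (c1 + C1) (Q m \<alpha>)"
    unfolding d_plump_def
  proof (intro conjI ballI allI impI)
    fix y k assume y: "y \<in> Q m \<alpha>" and k: "m \<le> k"
    from cube obtain \<beta> where b: "\<beta> \<in> I k" "y \<in> Q k \<beta>"
      "ball (x k \<beta>) (c1 * \<delta> powr of_int k) \<subseteq> Q k \<beta>"
      "ball (x k \<beta>) (c1 * \<delta> powr of_int k) \<subseteq> ball y ((c1 + C1) * \<delta> powr of_int k)" by blast
    have "Q k \<beta> \<subseteq> Q m \<alpha>" using nest[OF k assms(3) b(1)] y b(2) by blast
    thus "\<exists>z. ball z (c1 * \<delta> powr of_int k) \<subseteq> ball y ((c1 + C1) * \<delta> powr of_int k) \<inter> Q m \<alpha>"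
      using b by blast
  qed (use d0 c0 in auto)
  have P2: "d_plump \<delta> m c1 (c1 + C1) (UNIV - Q m \<alpha>)"
    unfolding d_plump_def
  proof (intro conjI ballI allI impI)
    fix y k assume y: "y \<in> UNIV - Q m \<alpha>" and k: "m \<le> k"
    from cube obtain \<beta> where b: "\<beta> \<in> I k" "y \<in> Q k \<beta>"
      "ball (x k \<beta>) (c1 * \<delta> powr of_int k) \<subseteq> Q k \<beta>"
      "ball (x k \<beta>) (c1 * \<delta> powr of_int k) \<subseteq> ball y ((c1 + C1) * \<delta> powr of_int k)" by blast
    have "Q k \<beta> \<subseteq> UNIV - Q m \<alpha>" using nest[OF k assms(3) b(1)] y b(2) by blast
    thus "\<exists>z. ball z (c1 * \<delta> powr of_int k) \<subseteq> ball y ((c1 + C1) * \<delta> powr of_int k) \<inter> (UNIV - Q m \<alpha>)"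
      using b by blast
  qed (use d0 c0 in auto)
  have P3: "plump ((c1 + C1) / (2 * \<delta> * C1) * diameter (Q m \<alpha>)) (\<delta> * c1 / (c1 + C1)) (Q m \<alpha>)"
    if dpos: "diameter (Q m \<alpha>) > 0"
  proof -
    define p where "p = \<delta> powr of_int m"
    have p0: "p > 0" using d0 p_def by simp
    have sub: "Q m \<alpha> \<subseteq> ball (x m \<alpha>) (C1 * p)" using balls[OF assms(3)] p_def by simp
    have bnd: "bounded (Q m \<alpha>)" using sub bounded_ball bounded_subset by blast
    have diam: "diameter (Q m \<alpha>) \<le> 2 * (C1 * p)"
    proof (rule ccontr)
      assume "\<not> ?thesis"
      then obtain u v where uv: "u \<in> Q m \<alpha>" "v \<in> Q m \<alpha>" "2 * (C1 * p) < dist u v"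
        using diameter_lower_bounded[OF bnd, of "2 * (C1 * p)"] c0 p0 by auto
      have "dist u v \<le> dist u (x m \<alpha>) + dist (x m \<alpha>) v" by (rule dist_triangle)
      also have "\<dots> < 2 * (C1 * p)"
      proof -
        have "dist (x m \<alpha>) u < C1 * p" "dist (x m \<alpha>) v < C1 * p" using sub uv(1,2) by auto
        thus ?thesis by (simp add: dist_commute)
      qed
      finally show False using uv(3) by simp
    qed
    define R where "R = (c1 + C1) / (2 * \<delta> * C1) * diameter (Q m \<alpha>)"
    have C0: "C1 > 0" using c0 by simp
    have R0: "R > 0" unfolding R_def using c0 d0 dpos by (intro mult_pos_pos divide_pos_pos) auto
    have pm1: "\<delta> powr of_int (m - 1) = p / \<delta>" unfolding p_def using d0
      by (simp add: powr_diff)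
    have "R \<le> (c1 + C1) / (2 * \<delta> * C1) * (2 * (C1 * p))"
      unfolding R_def using diam c0 d0 by (intro mult_left_mono) auto
    also have "\<dots> = (c1 + C1) * (p / \<delta>)" using C0 d0 by (simp add: field_simps)
    finally have Rle: "R \<le> (c1 + C1) * \<delta> powr of_int (m - 1)" using pm1 by simp
    have b1: "\<delta> * c1 / (c1 + C1) < 1"
    proof -
      have "\<delta> * c1 < c1 + C1" using d0 c0 by (smt (verit) mult_left_le_one_le)
      thus ?thesis using c0 by simp
    qed
    show ?thesis unfolding plump_def R_def[symmetric]
    proof (intro conjI ballI allI impI)
      fix y r assume y: "y \<in> Q m \<alpha>" and r: "0 < r \<and> r \<le> R"
      define t where "t = r / (c1 + C1)"
      have t0: "0 < t" using r c0 t_def by simp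
      have tle: "t \<le> \<delta> powr of_int (m - 1)"
      proof -
        have "r \<le> (c1 + C1) * \<delta> powr of_int (m - 1)" using Rle r by linarith
        thus ?thesis using c0 unfolding t_def by (simp add: divide_le_eq mult.commute)
      qed
      obtain k where k: "m \<le> k" "\<delta> powr of_int k \<le> t" "t \<le> \<delta> powr of_int (k - 1)"
        using exists_k[OF d0 t0 tle] by blast
      from P1[unfolded d_plump_def] y k(1) obtain z where
        z: "ball z (c1 * \<delta> powr of_int k) \<subseteq> ball y ((c1 + C1) * \<delta> powr of_int k) \<inter> Q m \<alpha>"
        by blast
      have e1: "\<delta> powr of_int (k - 1) = \<delta> powr of_int k / \<delta>" using d0 by (simp add: powr_diff)
      have "\<delta> * c1 / (c1 + C1) * r = \<delta> * c1 * t" using c0 t_def by simp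
      also have "\<dots> \<le> \<delta> * c1 * (\<delta> powr of_int k / \<delta>)" using k(3) e1 d0 c0 by (simp add: le_divide_eq mult.commute)
      also have "\<dots> = c1 * \<delta> powr of_int k" using d0 by simp
      finally have s1: "ball z (\<delta> * c1 / (c1 + C1) * r) \<subseteq> ball z (c1 * \<delta> powr of_int k)" by auto
      have "(c1 + C1) * \<delta> powr of_int k \<le> (c1 + C1) * t" using k(2) c0 by simp
      also have "\<dots> = r" using c0 t_def by simp
      finally have s2: "ball y ((c1 + C1) * \<delta> powr of_int k) \<subseteq> ball y r" by auto
      show "\<exists>z. ball z (\<delta> * c1 / (c1 + C1) * r) \<subseteq> ball y r \<inter> Q m \<alpha>"
        using s1 s2 z by blast
    qed (use R0 b1 d0 c0 in auto)
  qed
  show ?thesis using P1 P2 P3 by blast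
qed

end
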